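(* Let $p$ be an odd prime, $R$ a commutative $\mathbb{Z}_{(p)}$-algebra (viewed as a Tambara functor for the trivial group $e$), and $\{\underline E_*^{C_{p^s}}\}_{s\ge0}$ an $e$-equivariant Witt complex over $R$. Set $B^*_{s+1}:=\underline E_*^{C_{p^s}}(C_{p^s}/C_{p^s})$, a differential graded ring, and make $\{B^*_\bullet\}$ a pro-system with structure maps the ring maps $r:B^*_{s+1}\to B^*_s$ obtained by evaluating $r:\zeta_{C_p}\underline E^{C_{p^s}}_*\to\underline E_*^{C_{p^{s-1}}}$ at $C_{p^{s-1}}/C_{p^{s-1}}$. Then $B^*_\bullet$, with $\lambda: W_{s+1}(R)\cong\underline{\mathbb W}_{C_{p^s}}(R)(C_{p^s}/C_{p^s})\to B^0_{s+1}$, $F=\mathrm{res}^{C_{p^s}}_{C_{p^{s-1}}}$ and $V=\mathrm{tr}^{C_{p^s}}_{C_{p^{s-1}}}$, is a (classical) Witt complex over $R$.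
   Context: Here $\nu=1$. A $C_n$-equivariant Witt complex (specialized to $n=1$, $\nu=1$) over $R$ consists of graded $C_{p^s}$-Green functors $\underline E_*^{C_{p^s}}$ ($s\ge0$) with isomorphisms $i^*_{C_{p^k}}\underline E_*^{C_{p^s}}\cong\underline E_*^{C_{p^k}}$ for $k<s$; differentials $d$ making each $\underline E_*^{C_{p^s}}(C_{p^s}/C_{p^q})$ a differential graded ring, compatible with these isomorphisms; maps of $C_{p^{s-1}}$-Green functors $r:\zeta_{C_p}\underline E_*^{C_{p^s}}\to\underline E_*^{C_{p^{s-1}}}$ for $s\ge1$ ($\zeta_{C_p}$ = categorical $C_p$-fixed point Mackey functor, i.e. pullback along inflation $\mathrm{Span}(\mathrm{Fin}_{C_{p^s}/C_p})\to\mathrm{Span}(\mathrm{Fin}_{C_{p^s}})$); maps of Green functors $\lambda:\underline{\mathbb W}_{C_{p^s}}(R)\to\underline E_0^{C_{p^s}}$; satisfying (i) $\lambda r=r\lambda$, $dr=rd$; (ii) $\mathrm{res}^L_Hd\,\mathrm{tr}^L_H=d$ and $\mathrm{res}^L_H\mathrm{tr}^L_H=[L:H]$ for $H\subseteq L\subseteq C_{p^s}$; (iii) $i^*_{C_{p^{k-1}}}Fd\lambda([x]_k)=\lambda([x]_{k-1})^{p-1}d\lambda([x]_{k-1})$ for $x\in R$, $k\ge1$, where $F=\mathrm{res}^{C_{p^k}}_{C_{p^{k-1}}}$. Here $\underline{\mathbb W}_{C_{p^s}}(R)=\underline{\mathrm{HH}}^{C_{p^s}}_e(R)_0$, with $\underline{\mathbb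 W}_{C_{p^s}}(R)(C_{p^s}/C_{p^s})\cong W_{s+1}(R)$ (the $p$-typical Witt vectors); $r$ on Witt vectors corresponds to the classical restriction $R$; $[-]_k:R\to\underline{\mathbb W}_{C_{p^k}}(R)(C_{p^k}/C_{p^k})$ is the equivariant multiplicative lift (unit $R\to i_e^*N_e^{C_{p^k}}R$, internal norm $n_e^{C_{p^k}}$, quotient map). Classical Witt complex over $R$ (Hesselholt–Madsen): a pro-differential graded ring $E^*_\bullet$ with a strict map of pro-rings $\lambda:W_\bullet(R)\to E^0_\bullet$; a strict map of pro-graded rings $F:E^*_\bullet\to E^*_{\bullet-1}$ with $\lambda F=F\lambda$ and $Fd\lambda([a]_k)=\lambda([a]_{k-1})^{p-1}d\lambda([a]_{k-1})$ for $a\in R$, where $[a]_k=(a,0,\dots,0)\in W_{k+1}(R)$; and a strict map of graded $E^*_\bullet$-modules $V:F_*E^*_{\bullet-1}\to E^*_\bullet$ with $\lambda V=V\lambda$, $FdV=d$ and $FV=p$. *)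

theory Defs
  imports Complex_Main "HOL-Algebra.Ring" "HOL-Algebra.RingHom" "HOL-Library.Poly_Mapping"
          "HOL-Computational_Algebra.Primes"
begin

type_synonym wpoly = "(nat \<Rightarrow>\<^sub>0 nat) \<Rightarrow>\<^sub>0 rat"

definition wvar :: "nat \<Rightarrow> wpoly" where
  "wvar i = Poly_Mapping.single (Poly_Mapping.single i 1) 1"

definition ghost :: "nat \<Rightarrow> (nat \<Rightarrow> wpoly) \<Rightarrow> nat \<Rightarrow> wpoly" where
  "ghost p x k = (\<Sum>i\<le>k. of_nat (p ^ i) * x i ^ (p ^ (k - i)))"

text \<open>Given ghost targets G_k, the unique polynomials Z_k with w_k(Z) = G_k
  (recursively Z_k = (G_k - sum_{i<k} p^i Z_i^(p^(k-i))) / p^k).\<close>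
primrec ghost_inv_list :: "nat \<Rightarrow> (nat \<Rightarrow> wpoly) \<Rightarrow> nat \<Rightarrow> wpoly list" where
  "ghost_inv_list p G 0 = []"
| "ghost_inv_list p G (Suc k) =
     (let L = ghost_inv_list p G k
      in L @ [Poly_Mapping.map (\<lambda>c. c / of_nat (p ^ k))
                (G k - (\<Sum>i<k. of_nat (p ^ i) * (L ! i) ^ (p ^ (k - i))))])"

definition ghost_inv :: "nat \<Rightarrow> (nat \<Rightarrow> wpoly) \<Rightarrow> nat \<Rightarrow> wpoly" where
  "ghost_inv p G k = ghost_inv_list p G (Suc k) ! k"

text \<open>Evaluation of a polynomial in a commutative ring.  The Witt polynomials have
  integer coefficients, so taking the floor of each coefficient is exact.\<close>
definition peval :: "wpoly \<Rightarrow> (nat \<Rightarrow> 'r::comm_ring_1) \<Rightarrow> 'r" where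
  "peval P v = (\<Sum>m\<in>Poly_Mapping.keys P.
      of_int \<lfloor>Poly_Mapping.lookup P m\<rfloor> * (\<Prod>i\<in>Poly_Mapping.keys m. v i ^ Poly_Mapping.lookup m i))"

text \<open>Variables X_i = x_(2i), Y_i = x_(2i+1).\<close>
definition witt_sum_poly :: "nat \<Rightarrow> nat \<Rightarrow> wpoly" where
  "witt_sum_poly p = ghost_inv p (\<lambda>k. ghost p (\<lambda>i. wvar (2*i)) k + ghost p (\<lambda>i. wvar (2*i+1)) k)"

definition witt_prod_poly :: "nat \<Rightarrow> nat \<Rightarrow> wpoly" where
  "witt_prod_poly p = ghost_inv p (\<lambda>k. ghost p (\<lambda>i. wvar (2*i)) k * ghost p (\<lambda>i. wvar (2*i+1)) k)"

definition witt_frob_poly :: "nat \<Rightarrow> nat \<Rightarrow> wpoly" where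
  "witt_frob_poly p = ghost_inv p (\<lambda>k. ghost p wvar (Suc k))"

definition interleave :: "(nat \<Rightarrow> 'r) \<Rightarrow> (nat \<Rightarrow> 'r) \<Rightarrow> nat \<Rightarrow> 'r" where
  "interleave a b j = (if even j then a (j div 2) else b (j div 2))"

definition witt_ring :: "nat \<Rightarrow> nat \<Rightarrow> (nat \<Rightarrow> 'r::comm_ring_1) ring" where
  "witt_ring p n =
    \<lparr>carrier = {a. \<forall>i\<ge>n. a i = 0},
     monoid.mult = (\<lambda>a b i. if i < n then peval (witt_prod_poly p i) (interleave a b) else 0),
     one = (\<lambda>i. if i = 0 \<and> 0 < n then 1 else 0),
     zero = (\<lambda>i. 0),
     add = (\<lambda>a b i. if i < n then peval (witt_sum_poly p i) (interleave a b) else 0)\<rparr>"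

text \<open>Witt vector Frobenius F : W_(n+1)(R) -> W_n(R).\<close>
definition witt_F :: "nat \<Rightarrow> nat \<Rightarrow> (nat \<Rightarrow> 'r::comm_ring_1) \<Rightarrow> nat \<Rightarrow> 'r" where
  "witt_F p n a = (\<lambda>i. if i < n then peval (witt_frob_poly p i) a else 0)"

text \<open>Verschiebung V : W_n(R) -> W_(n+1)(R).\<close>
definition witt_V :: "nat \<Rightarrow> (nat \<Rightarrow> 'r::zero) \<Rightarrow> nat \<Rightarrow> 'r" where
  "witt_V n a = (\<lambda>i. if i = 0 \<or> n < i then 0 else a (i - 1))"

text \<open>Restriction R : W_(n+1)(R) -> W_n(R) (truncation).\<close>
definition witt_R :: "nat \<Rightarrow> (nat \<Rightarrow> 'r::zero) \<Rightarrow> nat \<Rightarrow> 'r" where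
  "witt_R n a = (\<lambda>i. if i < n then a i else 0)"

definition teich :: "nat \<Rightarrow> 'r::zero \<Rightarrow> nat \<Rightarrow> 'r" where
  "teich n x = (\<lambda>i. if i = 0 \<and> 0 < n then x else 0)"

definition graded_ring :: "('e, 'm) ring_scheme \<Rightarrow> (nat \<Rightarrow> 'e set) \<Rightarrow> bool" where
  "graded_ring A G \<longleftrightarrow> ring A \<and>
     (\<forall>n. subgroup (G n) (add_monoid A)) \<and>
     (\<forall>m n x y. x \<in> G m \<longrightarrow> y \<in> G n \<longrightarrow> x \<otimes>\<^bsub>A\<^esub> y \<in> G (m + n)) \<and>
     \<one>\<^bsub>A\<^esub> \<in> G 0 \<and>
     (\<forall>x\<in>carrier A. \<exists>!c. (\<forall>n. c n \<in> G n) \<and> finite {n. c n \<noteq> \<zero>\<^bsub>A\<^esub>} \<and>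
                          x = finsum A c {n. c n \<noteq> \<zero>\<^bsub>A\<^esub>})"

definition gsign :: "('e, 'm) ring_scheme \<Rightarrow> nat \<Rightarrow> 'e \<Rightarrow> 'e" where
  "gsign A m x = (if even m then x else \<ominus>\<^bsub>A\<^esub> x)"

definition dg_ring :: "('e, 'm) ring_scheme \<Rightarrow> (nat \<Rightarrow> 'e set) \<Rightarrow> ('e \<Rightarrow> 'e) \<Rightarrow> bool" where
  "dg_ring A G d \<longleftrightarrow> graded_ring A G \<and>
     d \<in> carrier A \<rightarrow> carrier A \<and>
     (\<forall>x\<in>carrier A. \<forall>y\<in>carrier A. d (x \<oplus>\<^bsub>A\<^esub> y) = d x \<oplus>\<^bsub>A\<^esub> d y) \<and>
     (\<forall>n. d ` G n \<subseteq> G (Suc n)) \<and>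
     (\<forall>m x y. x \<in> G m \<longrightarrow> y \<in> carrier A \<longrightarrow>
        d (x \<otimes>\<^bsub>A\<^esub> y) = (d x \<otimes>\<^bsub>A\<^esub> y) \<oplus>\<^bsub>A\<^esub> gsign A m (x \<otimes>\<^bsub>A\<^esub> d y)) \<and>
     (\<forall>x\<in>carrier A. d (d x) = \<zero>\<^bsub>A\<^esub>)"

definition graded_ring_hom ::
  "('e, 'm) ring_scheme \<Rightarrow> (nat \<Rightarrow> 'e set) \<Rightarrow> ('f, 'n) ring_scheme \<Rightarrow> (nat \<Rightarrow> 'f set) \<Rightarrow> ('e \<Rightarrow> 'f) \<Rightarrow> bool" where
  "graded_ring_hom A GA B GB f \<longleftrightarrow> f \<in> ring_hom A B \<and> (\<forall>n. f ` GA n \<subseteq> GB n)"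

definition graded_add_hom ::
  "('e, 'm) ring_scheme \<Rightarrow> (nat \<Rightarrow> 'e set) \<Rightarrow> ('f, 'n) ring_scheme \<Rightarrow> (nat \<Rightarrow> 'f set) \<Rightarrow> ('e \<Rightarrow> 'f) \<Rightarrow> bool" where
  "graded_add_hom A GA B GB f \<longleftrightarrow> f \<in> hom (add_monoid A) (add_monoid B) \<and> (\<forall>n. f ` GA n \<subseteq> GB n)"

text \<open>Level q stands for the orbit C_(p^s)/C_(p^q), 0 <= q <= s.  Res q : level q -> level (q-1),
  Tr q : level (q-1) -> level q, C q = action of a fixed generator g of C_(p^s) (Weyl action)
  on level q.\<close>
definition cyc_green_functor ::
  "nat \<Rightarrow> nat \<Rightarrow> (nat \<Rightarrow> 'e ring) \<Rightarrow> (nat \<Rightarrow> nat \<Rightarrow> 'e set) \<Rightarrow>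
   (nat \<Rightarrow> 'e \<Rightarrow> 'e) \<Rightarrow> (nat \<Rightarrow> 'e \<Rightarrow> 'e) \<Rightarrow> (nat \<Rightarrow> 'e \<Rightarrow> 'e) \<Rightarrow> bool" where
  "cyc_green_functor p s E G Res Tr C \<longleftrightarrow>
     (\<forall>q\<le>s. graded_ring (E q) (G q)) \<and>
     (\<forall>q. 1 \<le> q \<and> q \<le> s \<longrightarrow>
        graded_ring_hom (E q) (G q) (E (q - 1)) (G (q - 1)) (Res q) \<and>
        graded_add_hom (E (q - 1)) (G (q - 1)) (E q) (G q) (Tr q)) \<and>
     (\<forall>q\<le>s. graded_ring_hom (E q) (G q) (E q) (G q) (C q) \<and>
        (\<forall>x\<in>carrier (E q). (C q ^^ (p ^ (s - q))) x = x)) \<and>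
     (\<forall>q. 1 \<le> q \<and> q \<le> s \<longrightarrow>
        (\<forall>x\<in>carrier (E q). Res q (C q x) = C (q - 1) (Res q x)) \<and>
        (\<forall>x\<in>carrier (E (q - 1)). Tr q (C (q - 1) x) = C q (Tr q x)) \<and>
        (\<forall>x\<in>carrier (E (q - 1)).
           Res q (Tr q x) = finsum (E (q - 1)) (\<lambda>j. (C (q - 1) ^^ (j * p ^ (s - q))) x) {..<p}) \<and>
        (\<forall>x\<in>carrier (E (q - 1)). \<forall>y\<in>carrier (E q).
           Tr q (x \<otimes>\<^bsub>E (q - 1)\<^esub> Res q y) = Tr q x \<otimes>\<^bsub>E q\<^esub> y \<and>
           Tr q (Res q y \<otimes>\<^bsub>E (q - 1)\<^esub> x) = y \<otimes>\<^bsub>E q\<^esub> Tr q x))"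

primrec itres :: "(nat \<Rightarrow> 'e \<Rightarrow> 'e) \<Rightarrow> nat \<Rightarrow> nat \<Rightarrow> 'e \<Rightarrow> 'e" where
  "itres Res q 0 x = x"
| "itres Res q (Suc k) x = Res (q - k) (itres Res q k x)"

primrec ittr :: "(nat \<Rightarrow> 'e \<Rightarrow> 'e) \<Rightarrow> nat \<Rightarrow> nat \<Rightarrow> 'e \<Rightarrow> 'e" where
  "ittr Tr q 0 x = x"
| "ittr Tr q (Suc k) x = Tr q (ittr Tr (q - 1) k x)"

section \<open>e-equivariant Witt complexes (n = 1, nu = 1)\<close>

text \<open>E s q = value of the C_(p^s)-Green functor at C_(p^s)/C_(p^q) (total graded ring, graded pieces G s q);
  D s q its differential; Th s k q : E s q -> E k q (q <= k < s) the isomorphisms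
  i^*_(C_(p^k)) E^(C_(p^s)) = E^(C_(p^k)); Rr s q : E s q -> E (s-1) (q-1) the map r;
  Lam s q : W_(q+1)(R) -> degree 0 of E s q the map lambda (the Witt Green functor for C_(p^s)
  has value W_(q+1)(R) at level q, restriction F, transfer V, trivial Weyl action, r = R).\<close>
definition equiv_witt_complex ::
  "nat \<Rightarrow> (nat \<Rightarrow> nat \<Rightarrow> 'e ring) \<Rightarrow> (nat \<Rightarrow> nat \<Rightarrow> nat \<Rightarrow> 'e set) \<Rightarrow> (nat \<Rightarrow> nat \<Rightarrow> 'e \<Rightarrow> 'e) \<Rightarrow>
   (nat \<Rightarrow> nat \<Rightarrow> 'e \<Rightarrow> 'e) \<Rightarrow> (nat \<Rightarrow> nat \<Rightarrow> 'e \<Rightarrow> 'e) \<Rightarrow> (nat \<Rightarrow> nat \<Rightarrow> 'e \<Rightarrow> 'e) \<Rightarrow>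
   (nat \<Rightarrow> nat \<Rightarrow> nat \<Rightarrow> 'e \<Rightarrow> 'e) \<Rightarrow> (nat \<Rightarrow> nat \<Rightarrow> 'e \<Rightarrow> 'e) \<Rightarrow>
   (nat \<Rightarrow> nat \<Rightarrow> (nat \<Rightarrow> 'r::comm_ring_1) \<Rightarrow> 'e) \<Rightarrow> bool" where
  "equiv_witt_complex p E G D Res Tr C Th Rr Lam \<longleftrightarrow>
     \<comment> \<open>graded Green functors\<close>
     (\<forall>s. cyc_green_functor p s (E s) (G s) (Res s) (Tr s) (C s)) \<and>
     \<comment> \<open>differentials\<close>
     (\<forall>s q. q \<le> s \<longrightarrow> dg_ring (E s q) (G s q) (D s q)) \<and>
     \<comment> \<open>isomorphisms of Green functors i^* E^(C_(p^s)) = E^(C_(p^k)), compatible with d\<close>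
     (\<forall>s k q. q \<le> k \<and> k < s \<longrightarrow>
        graded_ring_hom (E s q) (G s q) (E k q) (G k q) (Th s k q) \<and>
        bij_betw (Th s k q) (carrier (E s q)) (carrier (E k q)) \<and>
        (\<forall>n. Th s k q ` G s q n = G k q n) \<and>
        (\<forall>x\<in>carrier (E s q). Th s k q ((C s q ^^ (p ^ (s - k))) x) = C k q (Th s k q x)) \<and>
        (\<forall>x\<in>carrier (E s q). Th s k q (D s q x) = D k q (Th s k q x))) \<and>
     (\<forall>s k q. 1 \<le> q \<and> q \<le> k \<and> k < s \<longrightarrow>
        (\<forall>x\<in>carrier (E s q). Th s k (q - 1) (Res s q x) = Res k q (Th s k q x)) \<and>
        (\<forall>x\<in>carrier (E s (q - 1)). Th s k q (Tr s q x) = Tr k q (Th s k (q - 1) x))) \<and>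
     \<comment> \<open>r : zeta_(C_p) E^(C_(p^s)) -> E^(C_(p^(s-1))) map of Green functors\<close>
     (\<forall>s q. 1 \<le> q \<and> q \<le> s \<longrightarrow>
        graded_ring_hom (E s q) (G s q) (E (s - 1) (q - 1)) (G (s - 1) (q - 1)) (Rr s q) \<and>
        (\<forall>x\<in>carrier (E s q). Rr s q (C s q x) = C (s - 1) (q - 1) (Rr s q x))) \<and>
     (\<forall>s q. 2 \<le> q \<and> q \<le> s \<longrightarrow>
        (\<forall>x\<in>carrier (E s q). Rr s (q - 1) (Res s q x) = Res (s - 1) (q - 1) (Rr s q x)) \<and>
        (\<forall>x\<in>carrier (E s (q - 1)). Rr s q (Tr s q x) = Tr (s - 1) (q - 1) (Rr s (q - 1) x))) \<and>
     \<comment> \<open>lambda : Witt Green functor -> E_0 map of Green functors\<close>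
     (\<forall>s q. q \<le> s \<longrightarrow>
        Lam s q \<in> ring_hom (witt_ring p (Suc q)) (E s q) \<and>
        Lam s q ` carrier (witt_ring p (Suc q)) \<subseteq> G s q 0 \<and>
        (\<forall>a\<in>carrier (witt_ring p (Suc q)). C s q (Lam s q a) = Lam s q a)) \<and>
     (\<forall>s q. 1 \<le> q \<and> q \<le> s \<longrightarrow>
        (\<forall>a\<in>carrier (witt_ring p (Suc q)). Res s q (Lam s q a) = Lam s (q - 1) (witt_F p q a)) \<and>
        (\<forall>b\<in>carrier (witt_ring p q). Lam s q (witt_V q b) = Tr s q (Lam s (q - 1) b))) \<and>
     \<comment> \<open>compatibility of r and lambda with the isomorphisms\<close>
     (\<forall>s k q. q \<le> k \<and> k < s \<longrightarrow>
        (\<forall>a\<in>carrier (witt_ring p (Suc q)). Th s k q (Lam s q a) = Lam k q a)) \<and>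
     (\<forall>s k q. 1 \<le> q \<and> q \<le> k \<and> k < s \<longrightarrow>
        (\<forall>x\<in>carrier (E s q). Rr k q (Th s k q x) = Th (s - 1) (k - 1) (q - 1) (Rr s q x))) \<and>
     \<comment> \<open>(i) lambda r = r lambda, d r = r d\<close>
     (\<forall>s q. 1 \<le> q \<and> q \<le> s \<longrightarrow>
        (\<forall>a\<in>carrier (witt_ring p (Suc q)). Rr s q (Lam s q a) = Lam (s - 1) (q - 1) (witt_R q a)) \<and>
        (\<forall>x\<in>carrier (E s q). D (s - 1) (q - 1) (Rr s q x) = Rr s q (D s q x))) \<and>
     \<comment> \<open>(ii) res d tr = d and res tr = [L:H]\<close>
     (\<forall>s j q. j \<le> q \<and> q \<le> s \<longrightarrow> (\<forall>x\<in>carrier (E s j).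
        itres (Res s) q (q - j) (D s q (ittr (Tr s) q (q - j) x)) = D s j x \<and>
        itres (Res s) q (q - j) (ittr (Tr s) q (q - j) x) = [(p ^ (q - j))] \<cdot>\<^bsub>E s j\<^esub> x)) \<and>
     \<comment> \<open>(iii) i^* F d lambda([x]_k) = lambda([x]_(k-1))^(p-1) d lambda([x]_(k-1))\<close>
     (\<forall>k (x::'r). 1 \<le> k \<longrightarrow>
        Th k (k - 1) (k - 1) (Res k k (D k k (Lam k k (teich (Suc k) x)))) =
          (Lam (k - 1) (k - 1) (teich k x)) [^]\<^bsub>E (k - 1) (k - 1)\<^esub> (p - 1)
            \<otimes>\<^bsub>E (k - 1) (k - 1)\<^esub> D (k - 1) (k - 1) (Lam (k - 1) (k - 1) (teich k x)))"

text \<open>Index s stands for E_(s+1) (which receives W_(s+1)(R)); Rm s : B (s+1) -> B s are the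
  structure maps of the pro-system.\<close>
definition witt_complex ::
  "nat \<Rightarrow> (nat \<Rightarrow> 'e ring) \<Rightarrow> (nat \<Rightarrow> nat \<Rightarrow> 'e set) \<Rightarrow> (nat \<Rightarrow> 'e \<Rightarrow> 'e) \<Rightarrow>
   (nat \<Rightarrow> 'e \<Rightarrow> 'e) \<Rightarrow> (nat \<Rightarrow> (nat \<Rightarrow> 'r::comm_ring_1) \<Rightarrow> 'e) \<Rightarrow>
   (nat \<Rightarrow> 'e \<Rightarrow> 'e) \<Rightarrow> (nat \<Rightarrow> 'e \<Rightarrow> 'e) \<Rightarrow> bool" where
  "witt_complex p B GB dB Rm lam F V \<longleftrightarrow>
     \<comment> \<open>pro-differential graded ring\<close>
     (\<forall>s. dg_ring (B s) (GB s) (dB s)) \<and>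
     (\<forall>s. graded_ring_hom (B (Suc s)) (GB (Suc s)) (B s) (GB s) (Rm s) \<and>
          (\<forall>x\<in>carrier (B (Suc s)). Rm s (dB (Suc s) x) = dB s (Rm s x))) \<and>
     \<comment> \<open>lambda strict map of pro-rings W_.(R) -> E^0_.\<close>
     (\<forall>s. lam s \<in> ring_hom (witt_ring p (Suc s)) (B s) \<and>
          lam s ` carrier (witt_ring p (Suc s)) \<subseteq> GB s 0 \<and>
          (\<forall>a\<in>carrier (witt_ring p (Suc (Suc s))). lam s (witt_R (Suc s) a) = Rm s (lam (Suc s) a))) \<and>
     \<comment> \<open>F strict map of pro-graded rings\<close>
     (\<forall>s. graded_ring_hom (B (Suc s)) (GB (Suc s)) (B s) (GB s) (F s) \<and>
          (\<forall>x\<in>carrier (B (Suc (Suc s))). F s (Rm (Suc s) x) = Rm s (F (Suc s) x)) \<and>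
          (\<forall>a\<in>carrier (witt_ring p (Suc (Suc s))). lam s (witt_F p (Suc s) a) = F s (lam (Suc s) a)) \<and>
          (\<forall>a::'r. F s (dB (Suc s) (lam (Suc s) (teich (Suc (Suc s)) a))) =
             (lam s (teich (Suc s) a)) [^]\<^bsub>B s\<^esub> (p - 1) \<otimes>\<^bsub>B s\<^esub> dB s (lam s (teich (Suc s) a)))) \<and>
     \<comment> \<open>V strict map of graded modules F_* E_(.-1) -> E_.\<close>
     (\<forall>s. graded_add_hom (B s) (GB s) (B (Suc s)) (GB (Suc s)) (V s) \<and>
          (\<forall>y\<in>carrier (B (Suc s)). Rm (Suc s) (V (Suc s) y) = V s (Rm s y)) \<and>
          (\<forall>a\<in>carrier (witt_ring p (Suc s)). lam (Suc s) (witt_V (Suc s) a) = V s (lam s a)) \<and>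
          (\<forall>x\<in>carrier (B (Suc s)). \<forall>y\<in>carrier (B s).
             V s (F s x \<otimes>\<^bsub>B s\<^esub> y) = x \<otimes>\<^bsub>B (Suc s)\<^esub> V s y \<and>
             V s (y \<otimes>\<^bsub>B s\<^esub> F s x) = V s y \<otimes>\<^bsub>B (Suc s)\<^esub> x) \<and>
          (\<forall>y\<in>carrier (B s). F s (dB (Suc s) (V s y)) = dB s y \<and>
             F s (V s y) = [p] \<cdot>\<^bsub>B s\<^esub> y))"

end

theory Submission
  imports Defs
begin

lemma hom_add_pow:
  fixes n :: nat
  assumes "f \<in> ring_hom A B" "ring A" "ring B" "x \<in> carrier A"
  shows "f ([n] \<cdot>\<^bsub>A\<^esub> x) = [n] \<cdot>\<^bsub>B\<^esub> f x \<and> [n] \<cdot>\<^bsub>A\<^esub> x \<in> carrier A"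
proof (induction n)
  case 0 then show ?case using assms by (simp add: add_pow_def ring_hom_zero ring.ring_simprules)
next
  case (Suc n)
  have e1: "[Suc n] \<cdot>\<^bsub>A\<^esub> x = [n] \<cdot>\<^bsub>A\<^esub> x \<oplus>\<^bsub>A\<^esub> x" by (simp only: add_pow_def nat_pow_Suc) simp
  have e2: "[Suc n] \<cdot>\<^bsub>B\<^esub> f x = [n] \<cdot>\<^bsub>B\<^esub> f x \<oplus>\<^bsub>B\<^esub> f x" by (simp only: add_pow_def nat_pow_Suc) simp
  have c: "[n] \<cdot>\<^bsub>A\<^esub> x \<in> carrier A" using Suc by blast
  have "f ([Suc n] \<cdot>\<^bsub>A\<^esub> x) = f ([n] \<cdot>\<^bsub>A\<^esub> x) \<oplus>\<^bsub>B\<^esub> f x"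
    unfolding e1 by (rule ring_hom_add[OF assms(1) c assms(4)])
  also have "\<dots> = [Suc n] \<cdot>\<^bsub>B\<^esub> f x" using Suc e2 by simp
  finally show ?case using c assms by (simp add: e1 ring.ring_simprules)
qed

lemma inv_eq:
  assumes "bij_betw T X Y" "x \<in> X" "T x = y"
  shows "inv_into X T y = x"
  using assms bij_betw_imp_inj_on inv_into_f_f by fastforce

theorem mainTheorem4:
  fixes p :: nat
    and E :: "nat \<Rightarrow> nat \<Rightarrow> 'e ring" and G :: "nat \<Rightarrow> nat \<Rightarrow> nat \<Rightarrow> 'e set"
    and D Res Tr C Rr :: "nat \<Rightarrow> nat \<Rightarrow> 'e \<Rightarrow> 'e"
    and Th :: "nat \<Rightarrow> nat \<Rightarrow> nat \<Rightarrow> 'e \<Rightarrow> 'e"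
    and Lam :: "nat \<Rightarrow> nat \<Rightarrow> (nat \<Rightarrow> 'r::comm_ring_1) \<Rightarrow> 'e"
  assumes "prime p" and "odd p"
    and "\<forall>l::nat. prime l \<and> l \<noteq> p \<longrightarrow> (\<exists>u::'r. of_nat l * u = 1)"
    and "equiv_witt_complex p E G D Res Tr C Th Rr Lam"
  shows "witt_complex p (\<lambda>s. E s s) (\<lambda>s. G s s) (\<lambda>s. D s s) (\<lambda>s. Rr (Suc s) (Suc s)) (\<lambda>s. Lam s s)
           (\<lambda>s x. Th (Suc s) s s (Res (Suc s) (Suc s) x))
           (\<lambda>s y. Tr (Suc s) (Suc s) (inv_into (carrier (E (Suc s) s)) (Th (Suc s) s s) y))"
proof -
  have one_le_Suc: "\<And>n::nat. 1 \<le> Suc n" by simp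
  note A = assms(4)[unfolded equiv_witt_complex_def]
  note C1 = A[THEN conjunct1]
  note A2 = A[THEN conjunct2]
  note C2 = A2[THEN conjunct1]
  note A3 = A2[THEN conjunct2]
  note C3 = A3[THEN conjunct1]
  note A4 = A3[THEN conjunct2]
  note C4 = A4[THEN conjunct1]
  note A5 = A4[THEN conjunct2]
  note C5 = A5[THEN conjunct1]
  note A6 = A5[THEN conjunct2]
  note C6 = A6[THEN conjunct1]
  note A7 = A6[THEN conjunct2]
  note C7 = A7[THEN conjunct1]
  note A8 = A7[THEN conjunct2]
  note C8 = A8[THEN conjunct1]
  note A9 = A8[THEN conjunct2]
  note C9 = A9[THEN conjunct1]
  note A10 = A9[THEN conjunct2]
  note C10 = A10[THEN conjunct1]
  note A11 = A10[THEN conjunct2]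
  note C11 = A11[THEN conjunct1]
  note A12 = A11[THEN conjunct2]
  note C12 = A12[THEN conjunct1]
  note C13 = A12[THEN conjunct2]
  have GF: "\<And>s. cyc_green_functor p s (E s) (G s) (Res s) (Tr s) (C s)" using C1 by blast
  have DG: "\<And>s q. q \<le> s \<Longrightarrow> dg_ring (E s q) (G s q) (D s q)" using C2 by blast
  have TH: "\<And>s k q. q \<le> k \<Longrightarrow> k < s \<Longrightarrow>
        graded_ring_hom (E s q) (G s q) (E k q) (G k q) (Th s k q) \<and>
        bij_betw (Th s k q) (carrier (E s q)) (carrier (E k q)) \<and>
        (\<forall>n. Th s k q ` G s q n = G k q n) \<and>
        (\<forall>x\<in>carrier (E s q). Th s k q (D s q x) = D k q (Th s k q x))" using C3 by blast
  have THRT: "\<And>s k q. 1 \<le> q \<Longrightarrow> q \<le> k \<Longrightarrow> k < s \<Longrightarrow>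
        (\<forall>x\<in>carrier (E s q). Th s k (q - 1) (Res s q x) = Res k q (Th s k q x)) \<and>
        (\<forall>x\<in>carrier (E s (q - 1)). Th s k q (Tr s q x) = Tr k q (Th s k (q - 1) x))" using C4 by blast
  have RR: "\<And>s q. 1 \<le> q \<Longrightarrow> q \<le> s \<Longrightarrow>
        graded_ring_hom (E s q) (G s q) (E (s - 1) (q - 1)) (G (s - 1) (q - 1)) (Rr s q)" using C5 by blast
  have RR2: "\<And>s q. 2 \<le> q \<Longrightarrow> q \<le> s \<Longrightarrow>
        (\<forall>x\<in>carrier (E s q). Rr s (q - 1) (Res s q x) = Res (s - 1) (q - 1) (Rr s q x)) \<and>
        (\<forall>x\<in>carrier (E s (q - 1)). Rr s q (Tr s q x) = Tr (s - 1) (q - 1) (Rr s (q - 1) x))" using C6 by blast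
  have LAM: "\<And>s q. q \<le> s \<Longrightarrow>
        Lam s q \<in> ring_hom (witt_ring p (Suc q)) (E s q) \<and>
        Lam s q ` carrier (witt_ring p (Suc q)) \<subseteq> G s q 0" using C7 by blast
  have LAM2: "\<And>s q. 1 \<le> q \<Longrightarrow> q \<le> s \<Longrightarrow>
        (\<forall>a\<in>carrier (witt_ring p (Suc q)). Res s q (Lam s q a) = Lam s (q - 1) (witt_F p q a)) \<and>
        (\<forall>b\<in>carrier (witt_ring p q). Lam s q (witt_V q b) = Tr s q (Lam s (q - 1) b))" using C8 by blast
  have THL: "\<And>s k q. q \<le> k \<Longrightarrow> k < s \<Longrightarrow>
        (\<forall>a\<in>carrier (witt_ring p (Suc q)). Th s k q (Lam s q a) = Lam k q a)" using C9 by blast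
  have RTH: "\<And>s k q. 1 \<le> q \<Longrightarrow> q \<le> k \<Longrightarrow> k < s \<Longrightarrow>
        (\<forall>x\<in>carrier (E s q). Rr k q (Th s k q x) = Th (s - 1) (k - 1) (q - 1) (Rr s q x))" using C10 by blast
  have I1: "\<And>s q. 1 \<le> q \<Longrightarrow> q \<le> s \<Longrightarrow>
        (\<forall>a\<in>carrier (witt_ring p (Suc q)). Rr s q (Lam s q a) = Lam (s - 1) (q - 1) (witt_R q a)) \<and>
        (\<forall>x\<in>carrier (E s q). D (s - 1) (q - 1) (Rr s q x) = Rr s q (D s q x))" using C11 by blast
  have I2: "\<And>s j q. j \<le> q \<Longrightarrow> q \<le> s \<Longrightarrow> (\<forall>x\<in>carrier (E s j).
        itres (Res s) q (q - j) (D s q (ittr (Tr s) q (q - j) x)) = D s j x \<and>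
        itres (Res s) q (q - j) (ittr (Tr s) q (q - j) x) = [(p ^ (q - j))] \<cdot>\<^bsub>E s j\<^esub> x)" using C12 by blast
  have I3: "\<And>k (x::'r). 1 \<le> k \<Longrightarrow>
        Th k (k - 1) (k - 1) (Res k k (D k k (Lam k k (teich (Suc k) x)))) =
          (Lam (k - 1) (k - 1) (teich k x)) [^]\<^bsub>E (k - 1) (k - 1)\<^esub> (p - 1)
            \<otimes>\<^bsub>E (k - 1) (k - 1)\<^esub> D (k - 1) (k - 1) (Lam (k - 1) (k - 1) (teich k x))" using C13 by blast
  have GF1: "\<And>s. graded_ring_hom (E (Suc s) (Suc s)) (G (Suc s) (Suc s)) (E (Suc s) s) (G (Suc s) s) (Res (Suc s) (Suc s)) \<and>
        graded_add_hom (E (Suc s) s) (G (Suc s) s) (E (Suc s) (Suc s)) (G (Suc s) (Suc s)) (Tr (Suc s) (Suc s)) \<and>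
        (\<forall>x\<in>carrier (E (Suc s) s). \<forall>y\<in>carrier (E (Suc s) (Suc s)).
           Tr (Suc s) (Suc s) (x \<otimes>\<^bsub>E (Suc s) s\<^esub> Res (Suc s) (Suc s) y) = Tr (Suc s) (Suc s) x \<otimes>\<^bsub>E (Suc s) (Suc s)\<^esub> y \<and>
           Tr (Suc s) (Suc s) (Res (Suc s) (Suc s) y \<otimes>\<^bsub>E (Suc s) s\<^esub> x) = y \<otimes>\<^bsub>E (Suc s) (Suc s)\<^esub> Tr (Suc s) (Suc s) x)"
  proof -
    fix s :: nat
    have "cyc_green_functor p (Suc s) (E (Suc s)) (G (Suc s)) (Res (Suc s)) (Tr (Suc s)) (C (Suc s))" by (rule GF)
    then show "?thesis s" unfolding cyc_green_functor_def
      by (metis (no_types, lifting) diff_Suc_1 le_add1 order_refl plus_1_eq_Suc)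
  qed
  have ringE: "\<And>s q. q \<le> s \<Longrightarrow> ring (E s q)"
    using DG unfolding dg_ring_def graded_ring_def by blast
  have ringS1: "\<And>s. ring (E (Suc s) s)" by (rule ringE) simp
  have ringS0: "\<And>s. ring (E s s)" by (rule ringE) simp
  have Gsub: "\<And>s q n. q \<le> s \<Longrightarrow> G s q n \<subseteq> carrier (E s q)"
  proof -
    fix s q n :: nat assume "q \<le> s"
    then have "dg_ring (E s q) (G s q) (D s q)" by (rule DG)
    then have "\<forall>n. subgroup (G s q n) (add_monoid (E s q))"
      unfolding dg_ring_def graded_ring_def by (elim conjE)
    then have "G s q n \<subseteq> carrier (add_monoid (E s q))" using subgroup.subset by blast
    then show "G s q n \<subseteq> carrier (E s q)" by simp
  qed
  have GsubS1: "\<And>s n. G (Suc s) s n \<subseteq> carrier (E (Suc s) s)" by (rule Gsub) simp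
  have P1: "\<And>s. dg_ring (E s s) (G s s) (D s s)" using DG by blast
  have P2: "\<And>s. graded_ring_hom (E (Suc s) (Suc s)) (G (Suc s) (Suc s)) (E s s) (G s s) (Rr (Suc s) (Suc s)) \<and>
          (\<forall>x\<in>carrier (E (Suc s) (Suc s)). Rr (Suc s) (Suc s) (D (Suc s) (Suc s) x) = D s s (Rr (Suc s) (Suc s) x))"
    using RR[of "Suc _" "Suc _"] I1[of "Suc _" "Suc _"] by simp
  have P3: "\<And>s. Lam s s \<in> ring_hom (witt_ring p (Suc s)) (E s s) \<and>
          Lam s s ` carrier (witt_ring p (Suc s)) \<subseteq> G s s 0 \<and>
          (\<forall>a\<in>carrier (witt_ring p (Suc (Suc s))). Lam s s (witt_R (Suc s) a) = Rr (Suc s) (Suc s) (Lam (Suc s) (Suc s) a))"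
    using LAM[of _ _] I1[of "Suc _" "Suc _"] by simp
  have P4: "\<And>s. graded_ring_hom (E (Suc s) (Suc s)) (G (Suc s) (Suc s)) (E s s) (G s s) (\<lambda>x. Th (Suc s) s s (Res (Suc s) (Suc s) x))"
  proof -
    fix s :: nat
    have a: "graded_ring_hom (E (Suc s) (Suc s)) (G (Suc s) (Suc s)) (E (Suc s) s) (G (Suc s) s) (Res (Suc s) (Suc s))"
      using GF1 by blast
    have b: "graded_ring_hom (E (Suc s) s) (G (Suc s) s) (E s s) (G s s) (Th (Suc s) s s)" using TH[OF order_refl lessI, of s] by simp
    show "?thesis s" using a b unfolding graded_ring_hom_def
      using ring_hom_trans[of "Res (Suc s) (Suc s)" "E (Suc s) (Suc s)" "E (Suc s) s" "Th (Suc s) s s" "E s s"]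
      by (auto simp: comp_def image_subset_iff)
  qed
  have P5: "\<And>s x. x \<in> carrier (E (Suc (Suc s)) (Suc (Suc s))) \<Longrightarrow>
      Th (Suc s) s s (Res (Suc s) (Suc s) (Rr (Suc (Suc s)) (Suc (Suc s)) x)) =
      Rr (Suc s) (Suc s) (Th (Suc (Suc s)) (Suc s) (Suc s) (Res (Suc (Suc s)) (Suc (Suc s)) x))"
  proof -
    fix s :: nat and x :: 'e assume x: "x \<in> carrier (E (Suc (Suc s)) (Suc (Suc s)))"
    have yc: "Res (Suc (Suc s)) (Suc (Suc s)) x \<in> carrier (E (Suc (Suc s)) (Suc s))"
      using GF1[of "Suc s"] x unfolding graded_ring_hom_def by (auto intro: ring_hom_closed)
    have "Rr (Suc (Suc s)) (Suc s) (Res (Suc (Suc s)) (Suc (Suc s)) x) = Res (Suc s) (Suc s) (Rr (Suc (Suc s)) (Suc (Suc s)) x)"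
      using RR2[of "Suc (Suc s)" "Suc (Suc s)"] x by simp
    moreover have "Rr (Suc s) (Suc s) (Th (Suc (Suc s)) (Suc s) (Suc s) (Res (Suc (Suc s)) (Suc (Suc s)) x))
       = Th (Suc s) s s (Rr (Suc (Suc s)) (Suc s) (Res (Suc (Suc s)) (Suc (Suc s)) x))"
      using bspec[OF RTH[OF one_le_Suc order_refl lessI] yc] by simp
    ultimately show "?thesis s x" by simp
  qed
  have P6: "\<And>s a. a \<in> carrier (witt_ring p (Suc (Suc s))) \<Longrightarrow>
      Lam s s (witt_F p (Suc s) a) = Th (Suc s) s s (Res (Suc s) (Suc s) (Lam (Suc s) (Suc s) a))"
  proof -
    fix s :: nat and a :: "nat \<Rightarrow> 'r" assume a: "a \<in> carrier (witt_ring p (Suc (Suc s)))"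
    have fc: "witt_F p (Suc s) a \<in> carrier (witt_ring p (Suc s))"
      by (simp add: witt_ring_def witt_F_def)
    show "?thesis s a" using LAM2[of "Suc s" "Suc s"] a THL[OF order_refl lessI, of s] fc by simp
  qed
  have P7: "\<And>s (a::'r). Th (Suc s) s s (Res (Suc s) (Suc s) (D (Suc s) (Suc s) (Lam (Suc s) (Suc s) (teich (Suc (Suc s)) a)))) =
             (Lam s s (teich (Suc s) a)) [^]\<^bsub>E s s\<^esub> (p - 1) \<otimes>\<^bsub>E s s\<^esub> D s s (Lam s s (teich (Suc s) a))"
    using I3[of "Suc _"] by simp
  have BIJ: "\<And>s. bij_betw (Th (Suc s) s s) (carrier (E (Suc s) s)) (carrier (E s s))"
    using TH[OF order_refl lessI] by simp
  have IVC: "\<And>s y. y \<in> carrier (E s s) \<Longrightarrow> inv_into (carrier (E (Suc s) s)) (Th (Suc s) s s) y \<in> carrier (E (Suc s) s)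
     \<and> Th (Suc s) s s (inv_into (carrier (E (Suc s) s)) (Th (Suc s) s s) y) = y"
  proof -
    fix s :: nat and y :: 'e assume y: "y \<in> carrier (E s s)"
    have "y \<in> Th (Suc s) s s ` carrier (E (Suc s) s)" using BIJ[of s] y by (simp add: bij_betw_def)
    then show "?thesis s y" by (simp add: inv_into_into f_inv_into_f)
  qed
  have THH: "\<And>s. Th (Suc s) s s \<in> ring_hom (E (Suc s) s) (E s s)"
    using TH[OF order_refl lessI] unfolding graded_ring_hom_def by simp
  have TRH: "\<And>s. graded_add_hom (E (Suc s) s) (G (Suc s) s) (E (Suc s) (Suc s)) (G (Suc s) (Suc s)) (Tr (Suc s) (Suc s))"
    using GF1[THEN conjunct2, THEN conjunct1] by this
  have V1: "\<And>s. graded_add_hom (E s s) (G s s) (E (Suc s) (Suc s)) (G (Suc s) (Suc s))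
      (\<lambda>y. Tr (Suc s) (Suc s) (inv_into (carrier (E (Suc s) s)) (Th (Suc s) s s) y))"
  proof -
    fix s :: nat
    let ?I = "inv_into (carrier (E (Suc s) s)) (Th (Suc s) s s)"
    have ih: "?I \<in> hom (add_monoid (E s s)) (add_monoid (E (Suc s) s))"
    proof (rule homI)
      fix y assume "y \<in> carrier (add_monoid (E s s))"
      then show "?I y \<in> carrier (add_monoid (E (Suc s) s))" using IVC by simp
    next
      fix y1 y2 assume y: "y1 \<in> carrier (add_monoid (E s s))" "y2 \<in> carrier (add_monoid (E s s))"
      have c: "?I y1 \<oplus>\<^bsub>E (Suc s) s\<^esub> ?I y2 \<in> carrier (E (Suc s) s)"
        using IVC y ringS1[of s] by (simp add: ring.ring_simprules)
      have "Th (Suc s) s s (?I y1 \<oplus>\<^bsub>E (Suc s) s\<^esub> ?I y2) = y1 \<oplus>\<^bsub>E s s\<^esub> y2"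
        using IVC y ring_hom_add[OF THH] by simp
      then have "?I (y1 \<oplus>\<^bsub>E s s\<^esub> y2) = ?I y1 \<oplus>\<^bsub>E (Suc s) s\<^esub> ?I y2"
        by (rule inv_eq[OF BIJ c])
      then show "?I (y1 \<otimes>\<^bsub>add_monoid (E s s)\<^esub> y2) = ?I y1 \<otimes>\<^bsub>add_monoid (E (Suc s) s)\<^esub> ?I y2"
        by simp
    qed
    have ig: "\<And>n. ?I ` G s s n \<subseteq> G (Suc s) s n"
    proof
      fix n :: nat and y :: 'e assume "y \<in> ?I ` G s s n"
      then obtain z where z: "z \<in> G s s n" "y = ?I z" by (rule imageE)
      have "Th (Suc s) s s ` G (Suc s) s n = G s s n" using TH[OF order_refl lessI, of s] by simp
      then have "z \<in> Th (Suc s) s s ` G (Suc s) s n" using z(1) by simp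
      then obtain x where x: "x \<in> G (Suc s) s n" "z = Th (Suc s) s s x" by (rule imageE)
      have xc: "x \<in> carrier (E (Suc s) s)" using x(1) GsubS1 by blast
      have "?I z = x" using inv_eq[OF BIJ[of s] xc x(2)[symmetric]] .
      then show "y \<in> G (Suc s) s n" using x(1) z(2) by simp
    qed
    have th: "Tr (Suc s) (Suc s) \<in> hom (add_monoid (E (Suc s) s)) (add_monoid (E (Suc s) (Suc s)))"
      and tg: "\<And>n. Tr (Suc s) (Suc s) ` G (Suc s) s n \<subseteq> G (Suc s) (Suc s) n"
      using TRH[of s] unfolding graded_add_hom_def by auto
    have "(\<lambda>y. Tr (Suc s) (Suc s) (?I y)) \<in> hom (add_monoid (E s s)) (add_monoid (E (Suc s) (Suc s)))"
    proof (rule homI)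
      fix y assume "y \<in> carrier (add_monoid (E s s))"
      then show "Tr (Suc s) (Suc s) (?I y) \<in> carrier (add_monoid (E (Suc s) (Suc s)))"
        using hom_in_carrier[OF th] hom_in_carrier[OF ih] by blast
    next
      fix y1 y2 assume y: "y1 \<in> carrier (add_monoid (E s s))" "y2 \<in> carrier (add_monoid (E s s))"
      have "?I (y1 \<otimes>\<^bsub>add_monoid (E s s)\<^esub> y2) = ?I y1 \<otimes>\<^bsub>add_monoid (E (Suc s) s)\<^esub> ?I y2"
        by (rule hom_mult[OF ih y])
      then show "Tr (Suc s) (Suc s) (?I (y1 \<otimes>\<^bsub>add_monoid (E s s)\<^esub> y2)) =
          Tr (Suc s) (Suc s) (?I y1) \<otimes>\<^bsub>add_monoid (E (Suc s) (Suc s))\<^esub> Tr (Suc s) (Suc s) (?I y2)"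
        using hom_mult[OF th hom_in_carrier[OF ih y(1)] hom_in_carrier[OF ih y(2)]] by simp
    qed
    moreover have "\<And>n. (\<lambda>y. Tr (Suc s) (Suc s) (?I y)) ` G s s n \<subseteq> G (Suc s) (Suc s) n"
      using ig tg by blast
    ultimately show "?thesis s" unfolding graded_add_hom_def by blast
  qed
  have V2: "\<And>s y. y \<in> carrier (E (Suc s) (Suc s)) \<Longrightarrow>
      Rr (Suc (Suc s)) (Suc (Suc s)) (Tr (Suc (Suc s)) (Suc (Suc s)) (inv_into (carrier (E (Suc (Suc s)) (Suc s))) (Th (Suc (Suc s)) (Suc s) (Suc s)) y))
      = Tr (Suc s) (Suc s) (inv_into (carrier (E (Suc s) s)) (Th (Suc s) s s) (Rr (Suc s) (Suc s) y))"
  proof -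
    fix s :: nat and y :: 'e assume y: "y \<in> carrier (E (Suc s) (Suc s))"
    define x where "x = inv_into (carrier (E (Suc (Suc s)) (Suc s))) (Th (Suc (Suc s)) (Suc s) (Suc s)) y"
    have x: "x \<in> carrier (E (Suc (Suc s)) (Suc s))" "Th (Suc (Suc s)) (Suc s) (Suc s) x = y"
      using IVC[where s="Suc s" and y=y] y x_def by auto
    have rx: "Rr (Suc (Suc s)) (Suc s) x \<in> carrier (E (Suc s) s)"
      using RR[where s="Suc (Suc s)" and q="Suc s"] x unfolding graded_ring_hom_def by (auto intro: ring_hom_closed)
    have "Rr (Suc (Suc s)) (Suc (Suc s)) (Tr (Suc (Suc s)) (Suc (Suc s)) x) = Tr (Suc s) (Suc s) (Rr (Suc (Suc s)) (Suc s) x)"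
      using RR2[of "Suc (Suc s)" "Suc (Suc s)"] x by simp
    moreover have "Rr (Suc s) (Suc s) y = Th (Suc s) s s (Rr (Suc (Suc s)) (Suc s) x)"
      using bspec[OF RTH[OF one_le_Suc order_refl lessI] x(1)] x(2) by simp
    then have "inv_into (carrier (E (Suc s) s)) (Th (Suc s) s s) (Rr (Suc s) (Suc s) y) = Rr (Suc (Suc s)) (Suc s) x"
      using inv_eq[OF BIJ rx] by metis
    ultimately show "?thesis s y" using x_def by simp
  qed
  have V3: "\<And>s a. a \<in> carrier (witt_ring p (Suc s)) \<Longrightarrow>
      Lam (Suc s) (Suc s) (witt_V (Suc s) a) = Tr (Suc s) (Suc s) (inv_into (carrier (E (Suc s) s)) (Th (Suc s) s s) (Lam s s a))"
  proof -
    fix s :: nat and a :: "nat \<Rightarrow> 'r" assume a: "a \<in> carrier (witt_ring p (Suc s))"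
    have lc: "Lam (Suc s) s a \<in> carrier (E (Suc s) s)"
      by (rule ring_hom_closed[OF conjunct1[OF LAM[where s="Suc s" and q=s, OF le_SucI[OF order_refl]]] a])
    have "Th (Suc s) s s (Lam (Suc s) s a) = Lam s s a" using THL[OF order_refl lessI, of s] a by simp
    then have "inv_into (carrier (E (Suc s) s)) (Th (Suc s) s s) (Lam s s a) = Lam (Suc s) s a"
      by (rule inv_eq[OF BIJ lc])
    then show "?thesis s a" using LAM2[of "Suc s" "Suc s"] a by simp
  qed
  have V4: "\<And>s x y. x \<in> carrier (E (Suc s) (Suc s)) \<Longrightarrow> y \<in> carrier (E s s) \<Longrightarrow>
      Tr (Suc s) (Suc s) (inv_into (carrier (E (Suc s) s)) (Th (Suc s) s s) (Th (Suc s) s s (Res (Suc s) (Suc s) x) \<otimes>\<^bsub>E s s\<^esub> y))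
        = x \<otimes>\<^bsub>E (Suc s) (Suc s)\<^esub> Tr (Suc s) (Suc s) (inv_into (carrier (E (Suc s) s)) (Th (Suc s) s s) y) \<and>
      Tr (Suc s) (Suc s) (inv_into (carrier (E (Suc s) s)) (Th (Suc s) s s) (y \<otimes>\<^bsub>E s s\<^esub> Th (Suc s) s s (Res (Suc s) (Suc s) x)))
        = Tr (Suc s) (Suc s) (inv_into (carrier (E (Suc s) s)) (Th (Suc s) s s) y) \<otimes>\<^bsub>E (Suc s) (Suc s)\<^esub> x"
  proof -
    fix s :: nat and x y :: 'e assume x: "x \<in> carrier (E (Suc s) (Suc s))" and y: "y \<in> carrier (E s s)"
    define z where "z = inv_into (carrier (E (Suc s) s)) (Th (Suc s) s s) y"
    have z: "z \<in> carrier (E (Suc s) s)" "Th (Suc s) s s z = y" using IVC[OF y] z_def by auto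
    have rx: "Res (Suc s) (Suc s) x \<in> carrier (E (Suc s) s)"
      using GF1[of s] x unfolding graded_ring_hom_def by (auto intro: ring_hom_closed)
    have c1: "Res (Suc s) (Suc s) x \<otimes>\<^bsub>E (Suc s) s\<^esub> z \<in> carrier (E (Suc s) s)"
      using rx z ringS1[of s] by (simp add: ring.ring_simprules)
    have c2: "z \<otimes>\<^bsub>E (Suc s) s\<^esub> Res (Suc s) (Suc s) x \<in> carrier (E (Suc s) s)"
      using rx z ringS1[of s] by (simp add: ring.ring_simprules)
    have e1: "inv_into (carrier (E (Suc s) s)) (Th (Suc s) s s) (Th (Suc s) s s (Res (Suc s) (Suc s) x) \<otimes>\<^bsub>E s s\<^esub> y)
        = Res (Suc s) (Suc s) x \<otimes>\<^bsub>E (Suc s) s\<^esub> z"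
      using inv_eq[OF BIJ c1] ring_hom_mult[OF THH rx z(1)] z by metis
    have e2: "inv_into (carrier (E (Suc s) s)) (Th (Suc s) s s) (y \<otimes>\<^bsub>E s s\<^esub> Th (Suc s) s s (Res (Suc s) (Suc s) x))
        = z \<otimes>\<^bsub>E (Suc s) s\<^esub> Res (Suc s) (Suc s) x"
      using inv_eq[OF BIJ c2] ring_hom_mult[OF THH z(1) rx] z by metis
    show "?thesis s x y" unfolding e1 e2 z_def[symmetric] using GF1[of s] x z by blast
  qed
  have V5: "\<And>s y. y \<in> carrier (E s s) \<Longrightarrow>
      Th (Suc s) s s (Res (Suc s) (Suc s) (D (Suc s) (Suc s) (Tr (Suc s) (Suc s) (inv_into (carrier (E (Suc s) s)) (Th (Suc s) s s) y)))) = D s s y \<and>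
      Th (Suc s) s s (Res (Suc s) (Suc s) (Tr (Suc s) (Suc s) (inv_into (carrier (E (Suc s) s)) (Th (Suc s) s s) y))) = [p] \<cdot>\<^bsub>E s s\<^esub> y"
  proof -
    fix s :: nat and y :: 'e assume y: "y \<in> carrier (E s s)"
    define z where "z = inv_into (carrier (E (Suc s) s)) (Th (Suc s) s s) y"
    have z: "z \<in> carrier (E (Suc s) s)" "Th (Suc s) s s z = y" using IVC[OF y] z_def by auto
    have h: "Res (Suc s) (Suc s) (D (Suc s) (Suc s) (Tr (Suc s) (Suc s) z)) = D (Suc s) s z \<and>
          Res (Suc s) (Suc s) (Tr (Suc s) (Suc s) z) = [p] \<cdot>\<^bsub>E (Suc s) s\<^esub> z"
      using I2[where s="Suc s" and j=s and q="Suc s"] z by simp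
    have "Th (Suc s) s s (D (Suc s) s z) = D s s y" using TH[OF order_refl lessI, of s] z by simp
    moreover have "Th (Suc s) s s ([p] \<cdot>\<^bsub>E (Suc s) s\<^esub> z) = [p] \<cdot>\<^bsub>E s s\<^esub> y"
      using hom_add_pow[OF THH ringS1 ringS0 z(1), of p] z by simp
    ultimately show "?thesis s y" using h z_def by simp
  qed
  show ?thesis unfolding witt_complex_def
    using P1 P2 P3 P4 P5 P6 P7 V1 V2 V3 V4 V5 by simp
qed
end
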